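(* Let $\varepsilon\in(0,1)$ and let $\mu,\lambda$ be positive integers with $\lambda\le(1-\varepsilon)e\mu$. Consider the $(\mu,\lambda)$ EA on OneMax with populations $P_0,P_1,\dots$, and let $g$ be the potential defined in the context. Then, for $n$ sufficiently large, for all $t\ge0$, \[E[g(P_{t+1})\mid P_t]\le g(P_t)+2\lambda.\]
   Context: $f$ is OneMax, $f(x)=\sum_i x_i$. The $(\mu,\lambda)$ EA: $P_0$ consists of $\mu$ independent uniformly random points of $\{0,1\}^n$; in each generation $\lambda$ offspring are created independently, each by choosing a parent uniformly at random from $P_t$ and flipping each bit of a copy independently with probability $1/n$; $P_{t+1}$ consists of the $\mu$ offspring with largest $f$-values (ties broken randomly). Potential: $\tau=\frac{4e}{\varepsilon}$, $\alpha=1-\frac1\tau\ln\big(1+\frac1\tau\big)$, $f_0=\lceil\alpha n\rceil$, $g(x)=\tau^{f(x)-f_0}$ if $f(x)\ge f_0$ and $g(x)=0$ otherwise; for a population (multiset) $P$, $g(P)=\sum_{x\in P}g(x)$. *)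

theory Defs
  imports "HOL-Probability.Probability"
begin

definition onemax :: "bool list \<Rightarrow> nat" where
  "onemax x = length (filter id x)"

fun mutate :: "real \<Rightarrow> bool list \<Rightarrow> bool list pmf" where
  "mutate p [] = return_pmf []"
| "mutate p (b # bs) =
     bernoulli_pmf p \<bind> (\<lambda>c. mutate p bs \<bind> (\<lambda>rest. return_pmf ((b \<noteq> c) # rest)))"

fun iid_list :: "nat \<Rightarrow> 'a pmf \<Rightarrow> 'a list pmf" where
  "iid_list 0 D = return_pmf []"
| "iid_list (Suc k) D = D \<bind> (\<lambda>x. iid_list k D \<bind> (\<lambda>xs. return_pmf (x # xs)))"

definition offspring :: "nat \<Rightarrow> bool list multiset \<Rightarrow> bool list pmf" where
  "offspring n P = pmf_of_multiset P \<bind> mutate (1 / real n)"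

definition top_sets :: "('a \<Rightarrow> nat) \<Rightarrow> nat \<Rightarrow> 'a list \<Rightarrow> nat set set" where
  "top_sets f mu xs = {S. S \<subseteq> {..<length xs} \<and> card S = mu \<and>
      (\<forall>i\<in>S. \<forall>j\<in>{..<length xs} - S. f (xs ! j) \<le> f (xs ! i))}"

definition select :: "nat \<Rightarrow> bool list list \<Rightarrow> bool list multiset pmf" where
  "select mu xs = map_pmf (\<lambda>S. image_mset (\<lambda>i. xs ! i) (mset_set S))
                          (pmf_of_set (top_sets onemax mu xs))"

text \<open>One generation of the (mu,lambda) EA on OneMax: distribution of P_{t+1} given P_t = P.\<close>
definition ea_step :: "nat \<Rightarrow> nat \<Rightarrow> nat \<Rightarrow> bool list multiset \<Rightarrow> bool list multiset pmf" where
  "ea_step n mu lam P = iid_list lam (offspring n P) \<bind> select mu"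

definition tau :: "real \<Rightarrow> real" where
  "tau \<epsilon> = 4 * exp 1 / \<epsilon>"

definition alpha :: "real \<Rightarrow> real" where
  "alpha \<epsilon> = 1 - (1 / tau \<epsilon>) * ln (1 + 1 / tau \<epsilon>)"

definition f0 :: "real \<Rightarrow> nat \<Rightarrow> int" where
  "f0 \<epsilon> n = \<lceil>alpha \<epsilon> * real n\<rceil>"

definition g_pt :: "real \<Rightarrow> nat \<Rightarrow> bool list \<Rightarrow> real" where
  "g_pt \<epsilon> n x = (if int (onemax x) \<ge> f0 \<epsilon> n
                   then tau \<epsilon> ^ nat (int (onemax x) - f0 \<epsilon> n) else 0)"

definition g_pop :: "real \<Rightarrow> nat \<Rightarrow> bool list multiset \<Rightarrow> real" where
  "g_pop \<epsilon> n P = (\<Sum>x\<in>#P. g_pt \<epsilon> n x)"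

end

theory Submission
  imports Defs
begin


lemma onemax_Cons: "onemax (a # r) = (if a then Suc (onemax r) else onemax r)"
  by (simp add: onemax_def)

lemma onemax_le: "onemax x \<le> length x"
  by (simp add: onemax_def)

lemma mutate_gf:
  assumes p: "0 \<le> p" "p \<le> 1" and c: "0 \<le> c"
  shows "(\<integral>\<^sup>+y. ennreal (c ^ onemax y) \<partial>mutate p x) =
    ennreal (((1-p)*c + p) ^ onemax x * (p*c + (1-p)) ^ (length x - onemax x))"
proof (induction x)
  case Nil
  then show ?case by (simp add: onemax_def)
next
  case (Cons b bs)
  have inner: "(\<integral>\<^sup>+rest. ennreal (c ^ onemax ((b \<noteq> d) # rest)) \<partial>mutate p bs)
     = ennreal (if b \<noteq> d then c else 1) * ennreal (((1-p)*c + p) ^ onemax bs * (p*c + (1-p)) ^ (length bs - onemax bs))" for d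
  proof -
    have "(\<integral>\<^sup>+rest. ennreal (c ^ onemax ((b \<noteq> d) # rest)) \<partial>mutate p bs)
       = (\<integral>\<^sup>+rest. ennreal (if b \<noteq> d then c else 1) * ennreal (c ^ onemax rest) \<partial>mutate p bs)"
      by (intro nn_integral_cong) (simp add: onemax_Cons c ennreal_mult[symmetric])
    also have "\<dots> = ennreal (if b \<noteq> d then c else 1) * (\<integral>\<^sup>+rest. ennreal (c ^ onemax rest) \<partial>mutate p bs)"
      by (simp add: nn_integral_cmult)
    finally show ?thesis using Cons by simp
  qed
  have "(\<integral>\<^sup>+y. ennreal (c ^ onemax y) \<partial>mutate p (b # bs)) =
     (\<integral>\<^sup>+d. (\<integral>\<^sup>+rest. ennreal (c ^ onemax ((b \<noteq> d) # rest)) \<partial>mutate p bs) \<partial>bernoulli_pmf p)"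
    by simp
  also have "\<dots> = (\<integral>\<^sup>+d. ennreal (if b \<noteq> d then c else 1) * ennreal (((1-p)*c + p) ^ onemax bs * (p*c + (1-p)) ^ (length bs - onemax bs)) \<partial>bernoulli_pmf p)"
    by (rule nn_integral_cong, rule inner)
  also have "\<dots> = ennreal (((1-p)*c + p) ^ onemax (b#bs) * (p*c + (1-p)) ^ (length (b#bs) - onemax (b#bs)))"
    using p c onemax_le[of bs]
  proof (cases b)
    case True
    define X where "X = ((1-p)*c + p) ^ onemax bs * (p*c + (1-p)) ^ (length bs - onemax bs)"
    have X: "0 \<le> X" unfolding X_def using p c by simp
    have e: "X * p + c * X * (1-p) = ((1-p)*c + p) ^ onemax (True#bs) * (p*c + (1-p)) ^ (Suc (length bs) - onemax (True#bs))"
      using onemax_le[of bs] by (simp add: onemax_Cons X_def Suc_diff_le algebra_simps)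
    have l: "ennreal X * ennreal p + ennreal c * ennreal X * ennreal (1 - p) = ennreal (X * p + c * X * (1-p))"
      using p c X by (simp add: ennreal_plus ennreal_mult)
    show ?thesis
      using p c X True
      apply (subst nn_integral_bernoulli_pmf)
      apply (simp_all add: X_def[symmetric])
      using l e by simp
  next
    case False
    define X where "X = ((1-p)*c + p) ^ onemax bs * (p*c + (1-p)) ^ (length bs - onemax bs)"
    have X: "0 \<le> X" unfolding X_def using p c by simp
    have e: "c * X * p + X * (1-p) = ((1-p)*c + p) ^ onemax (False#bs) * (p*c + (1-p)) ^ (Suc (length bs) - onemax (False#bs))"
      using onemax_le[of bs] by (simp add: onemax_Cons X_def Suc_diff_le algebra_simps)
    have l: "ennreal c * ennreal X * ennreal p + ennreal X * ennreal (1 - p) = ennreal (c * X * p + X * (1-p))"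
      using p c X by (simp add: ennreal_plus ennreal_mult)
    show ?thesis
      using p c X False
      apply (subst nn_integral_bernoulli_pmf)
      apply (simp_all add: X_def[symmetric])
      using l e by simp
  qed
  finally show ?case .
qed



lemma pow_exp_bound:
  fixes x :: real assumes "0 \<le> 1 + x"
  shows "(1 + x) ^ j \<le> exp (real j * x)"
proof -
  have "(1 + x) ^ j \<le> exp x ^ j"
    using assms by (intro power_mono) (simp_all add: exp_ge_add_one_self)
  also have "\<dots> = exp (real j * x)" by (simp add: exp_of_nat_mult)
  finally show ?thesis .
qed

lemma key_real:
  fixes \<epsilon> :: real and n k F mu lam :: nat
  assumes e0: "0 < \<epsilon>" and e1: "\<epsilon> < 1" and nt: "tau \<epsilon> \<le> real n" and kn: "k \<le> n"
    and F: "real F \<ge> alpha \<epsilon> * real n"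
    and mu: "0 < mu" and lam: "0 < lam" and ml: "real lam \<le> (1 - \<epsilon>) * exp 1 * real mu"
  shows "((1 - 1/real n) * tau \<epsilon> + 1/real n) ^ k * (1/real n * tau \<epsilon> + (1 - 1/real n)) ^ (n - k) / tau \<epsilon> ^ F
     \<le> real mu / real lam * (if F \<le> k then tau \<epsilon> ^ (k - F) else 0) + 2"
proof -
  define t where "t = tau \<epsilon>"
  define u where "u = 1 / t"
  define L where "L = ln (1 + u)"
  define p where "p = 1 / real n"
  have t4: "t = 4 * exp 1 / \<epsilon>" by (simp add: t_def tau_def)
  have te: "t \<ge> 4 * exp 1" using e0 e1 unfolding t4 by (simp add: field_simps)
  have ex1: "(1::real) \<le> exp 1" by simp
  have t1: "t \<ge> 1" using te ex1 by linarith
  have tpos: "t > 0" using t1 by linarith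
  have ut: "u * t = 1" using tpos by (simp add: u_def)
  have u0: "0 < u" using tpos by (simp add: u_def)
  have ueps: "2 * u \<le> \<epsilon>"
  proof -
    have ue: "u * (4 * exp 1) = \<epsilon>" using e0 by (simp add: u_def t4)
    have e1': "exp 1 \<ge> (1::real)" by simp
    have "u * 2 \<le> u * (4 * exp 1)" by (rule mult_left_mono) (use e1' u0 in linarith)+
    thus ?thesis using ue by simp
  qed
  have u1: "u \<le> 1/2" using ueps e1 by simp
  have L0: "0 \<le> L" using u0 by (simp add: L_def)
  have Lu: "L \<le> u" unfolding L_def using u0 by (intro ln_add_one_self_le_self) simp
  have expL: "exp L = 1 + u" using u0 by (simp add: L_def)
  have alpha: "alpha \<epsilon> = 1 - u * L" by (simp add: alpha_def L_def u_def t_def)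
  have npos: "real n > 0" using nt tpos t_def by simp
  have p0: "0 < p" "p \<le> 1" using npos nt te t_def by (simp_all add: p_def field_simps)
  have pn: "p * real n = 1" using npos by (simp add: p_def)
  have np: "real n * p = 1" using npos by (simp add: p_def)
  define B where "B = p * t + (1 - p)"
  have B: "B = 1 + p * (t - 1)" by (simp add: B_def algebra_simps)
  have pt: "0 \<le> p * (t - 1)" using p0 t1 by simp
  have Bexp: "B ^ (n - k) \<le> exp (real (n - k) * (p * (t - 1)))"
    unfolding B by (rule pow_exp_bound) (use pt in linarith)
  have B0: "0 \<le> B" unfolding B using pt by linarith
  have nk: "real (n - k) = real n - real k" using kn by simp
  show ?thesis
  proof (cases "F \<le> k")
    case True
    define A where "A = 1 - p * (1 - u)"
    have A: "(1 - p) * t + p = t * A" using ut by (simp add: A_def algebra_simps)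
    have "p * (1 - u) \<le> 1" using p0 u0 u1 by (intro mult_le_one) auto
    hence A0: "0 \<le> 1 + (- p * (1 - u))" by linarith
    have Aexp: "A ^ k \<le> exp (real k * (- p * (1 - u)))"
      unfolding A_def using pow_exp_bound[OF A0, of k] by simp
    have tk: "t ^ k / t ^ F = t ^ (k - F)" using True tpos by (simp add: power_diff)
    have "((1 - p) * t + p) ^ k * B ^ (n - k) / t ^ F = t ^ (k - F) * (A ^ k * B ^ (n - k))"
      unfolding A power_mult_distrib tk[symmetric] by simp
    also have "\<dots> \<le> t ^ (k - F) * (exp (real k * (- p * (1 - u))) * exp (real (n - k) * (p * (t - 1))))"
      using Aexp Bexp B0 tpos A0 by (intro mult_left_mono mult_mono) (simp_all add: A_def)
    also have "\<dots> = t ^ (k - F) * exp (real k * (- p * (1 - u)) + real (n - k) * (p * (t - 1)))"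
      by (simp only: exp_add)
    also have "\<dots> \<le> t ^ (k - F) * exp (-1 + 2 * u)"
    proof -
      define a where "a = real k * p"
      have aa: "a \<ge> 1 - u * L"
      proof -
        have "real k \<ge> (1 - u * L) * real n" using F True alpha by simp
        hence "real k * p \<ge> (1 - u * L) * real n * p" using p0 by (intro mult_right_mono) auto
        moreover have "(1 - u * L) * real n * p = 1 - u * L" using pn by (simp add: mult.assoc np)
        ultimately show ?thesis by (simp add: a_def)
      qed
      have eq: "real k * (- p * (1 - u)) + real (n - k) * (p * (t - 1)) = (t - 1) - a * (t - u)"
        unfolding nk a_def using pn ut by (simp add: algebra_simps)
      have tu: "t - u > 0" using t1 u1 by linarith
      have "(t - 1) - a * (t - u) \<le> (t - 1) - (1 - u * L) * (t - u)"
        using aa tu by (intro diff_left_mono mult_right_mono) auto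
      also have "\<dots> = -1 + u + L * (1 - u * u)" using ut by (simp add: algebra_simps)
      also have "\<dots> \<le> -1 + 2 * u"
      proof -
        have "L * (1 - u * u) \<le> u * 1"
        proof -
          have "u * u \<le> 1" using u0 u1 by (intro mult_le_one) auto
          thus ?thesis using Lu L0 u0 u1 by (intro mult_mono) auto
        qed
        thus ?thesis by simp
      qed
      finally show ?thesis unfolding eq using tpos by (intro mult_left_mono) auto
    qed
    also have "\<dots> \<le> t ^ (k - F) * (real mu / real lam)"
    proof -
      have "exp (-1 + 2 * u) * real lam \<le> exp (-1 + 2*u) * ((1 - \<epsilon>) * exp 1 * real mu)"
        using ml by (intro mult_left_mono) auto
      also have "\<dots> = (exp (-1 + 2*u) * exp 1) * (1 - \<epsilon>) * real mu"
        by (simp only: mult.assoc mult.left_commute)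
      also have "exp (-1 + 2*u) * exp 1 = exp (2*u)" by (simp flip: exp_add)
      also have "exp (2*u) * (1 - \<epsilon>) * real mu \<le> 1 * real mu"
      proof -
        have "exp (2*u) \<le> exp \<epsilon>" using ueps by simp
        moreover have "1 - \<epsilon> \<le> exp (-\<epsilon>)" using exp_ge_add_one_self[of "-\<epsilon>"] by simp
        ultimately have "exp (2*u) * (1 - \<epsilon>) \<le> exp \<epsilon> * exp (-\<epsilon>)"
          using e1 by (intro mult_mono) auto
        hence "exp (2*u) * (1 - \<epsilon>) \<le> 1" by (simp add: exp_minus)
        thus ?thesis by (intro mult_right_mono) auto
      qed
      finally have "exp (-1 + 2 * u) * real lam \<le> real mu" by simp
      hence "exp (-1 + 2 * u) \<le> real mu / real lam" using lam by (simp add: field_simps)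
      thus ?thesis using tpos by (intro mult_left_mono) auto
    qed
    finally show ?thesis using True by (simp add: t_def p_def B_def mult.commute)
  next
    case False
    define d where "d = F - k"
    have d1: "d \<ge> 1" and dF: "real F = real k + real d" using False by (auto simp: d_def)
    have "(1 - p) * t + p = t - p * (t - 1)" by (simp add: algebra_simps)
    hence Ale: "(1 - p) * t + p \<le> t" using pt by linarith
    have Ale0: "0 \<le> (1 - p) * t + p" using p0 tpos by simp
    have "((1 - p) * t + p) ^ k * B ^ (n - k) / t ^ F \<le> t ^ k * B ^ (n - k) / t ^ F"
      using Ale Ale0 B0 tpos by (intro divide_right_mono mult_right_mono power_mono) auto
    also have "\<dots> = B ^ (n - k) / t ^ d"
    proof -
      have "t ^ F = t ^ k * t ^ d" using False by (simp add: d_def power_add[symmetric])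
      thus ?thesis using tpos by simp
    qed
    also have "\<dots> \<le> exp (real (n - k) * (p * (t - 1))) / t ^ d"
      using Bexp tpos by (intro divide_right_mono) auto
    also have "\<dots> \<le> exp (L + real d) / t ^ d"
    proof -
      have "real (n - k) * (p * (t - 1)) \<le> real (n - k) * p * t"
        using p0 by (simp add: algebra_simps)
      also have "real (n - k) * p * t \<le> (u * L * real n + real d) * p * t"
      proof -
        have "real (n - k) \<le> u * L * real n + real d"
          using F alpha dF nk by (simp add: algebra_simps)
        thus ?thesis using p0 tpos by (intro mult_right_mono) auto
      qed
      also have "\<dots> = L * (u * t) * (real n * p) + real d * (p * t)" by (simp add: algebra_simps)
      also have "\<dots> = L + real d * (p * t)" using np ut by simp
      also have "\<dots> \<le> L + real d"
      proof -
        have "p * t \<le> 1" using nt npos by (simp add: p_def t_def field_simps)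
        thus ?thesis by (simp add: mult_left_le)
      qed
      finally show ?thesis using tpos by (intro divide_right_mono) auto
    qed
    also have "\<dots> = (1 + u) * (exp 1 / t) ^ d"
      by (simp add: exp_add expL exp_of_nat_mult[symmetric] power_divide mult.commute)
    also have "\<dots> \<le> (1 + u) * 1"
    proof -
      have ex0: "exp 1 > (0::real)" by simp
      have "exp 1 \<le> t" using te ex0 by linarith
      hence "exp 1 / t \<le> 1" using tpos by (simp add: divide_le_eq)
      hence "(exp 1 / t) ^ d \<le> 1" using tpos by (intro power_le_one) auto
      thus ?thesis using u0 by (intro mult_left_mono) auto
    qed
    also have "\<dots> \<le> 2" using u1 by simp
    finally have "((1 - p) * t + p) ^ k * B ^ (n - k) / t ^ F \<le> 2" .
    thus ?thesis using False by (simp add: t_def p_def B_def mult.commute)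
  qed
qed



lemma top_exists:
  fixes f :: "nat \<Rightarrow> nat"
  assumes "finite I" "m \<le> card I"
  shows "\<exists>S\<subseteq>I. card S = m \<and> (\<forall>i\<in>S. \<forall>j\<in>I - S. f j \<le> f i)"
  using assms(2)
proof (induction m)
  case 0
  show ?case by (intro exI[of _ "{}"]) simp
next
  case (Suc m)
  then obtain S where S: "S \<subseteq> I" "card S = m" "\<forall>i\<in>S. \<forall>j\<in>I - S. f j \<le> f i" by auto
  have fS: "finite S" using S(1) assms(1) finite_subset by blast
  have ne: "I - S \<noteq> {}"
  proof
    assume "I - S = {}"
    hence "I \<subseteq> S" by blast
    hence "card I \<le> card S" using fS by (simp add: card_mono)
    thus False using Suc.prems S(2) by simp
  qed
  have fin: "finite (f ` (I - S))" using assms(1) by simp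
  have "Max (f ` (I - S)) \<in> f ` (I - S)" using Max_in[OF fin] ne by auto
  then obtain j where j: "j \<in> I - S" "f j = Max (f ` (I - S))" by (metis imageE)
  have jmax: "\<forall>k\<in>I - S. f k \<le> f j" using j(2) fin by simp
  show ?case
  proof (intro exI[of _ "insert j S"] conjI)
    show "insert j S \<subseteq> I" using j S by auto
    show "card (insert j S) = Suc m" using j S fS by simp
    show "\<forall>i\<in>insert j S. \<forall>k\<in>I - insert j S. f k \<le> f i"
      using S(3) jmax by auto
  qed
qed

lemma top_sets_ne:
  assumes "mu \<le> length xs"
  shows "top_sets f mu xs \<noteq> {}" "finite (top_sets f mu xs)"
proof -
  obtain S where "S \<subseteq> {..<length xs}" "card S = mu"
     "\<forall>i\<in>S. \<forall>j\<in>{..<length xs} - S. (\<lambda>i. f (xs ! i)) j \<le> (\<lambda>i. f (xs ! i)) i"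
    using top_exists[of "{..<length xs}" mu "\<lambda>i. f (xs ! i)"] assms by auto
  thus "top_sets f mu xs \<noteq> {}" unfolding top_sets_def by auto
  have "top_sets f mu xs \<subseteq> Pow {..<length xs}" unfolding top_sets_def by auto
  thus "finite (top_sets f mu xs)" by (rule finite_subset) simp
qed

lemma g_pt_nonneg: "0 < \<epsilon> \<Longrightarrow> 0 \<le> g_pt \<epsilon> n x"
  by (simp add: g_pt_def tau_def)

lemma select_bound:
  assumes e: "0 < \<epsilon>" and m: "mu \<le> length xs"
  shows "(\<integral>\<^sup>+Q. ennreal (g_pop \<epsilon> n Q) \<partial>select mu xs) \<le> ennreal (sum_list (map (g_pt \<epsilon> n) xs))"
proof -
  have "(\<integral>\<^sup>+Q. ennreal (g_pop \<epsilon> n Q) \<partial>select mu xs) \<le> (\<integral>\<^sup>+Q. ennreal (sum_list (map (g_pt \<epsilon> n) xs)) \<partial>select mu xs)"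
  proof (intro nn_integral_mono_AE AE_pmfI)
    fix Q assume "Q \<in> set_pmf (select mu xs)"
    then obtain S where S: "S \<in> top_sets onemax mu xs" and Q: "Q = image_mset (\<lambda>i. xs ! i) (mset_set S)"
      unfolding select_def using top_sets_ne[OF m] by auto
    have Ssub: "S \<subseteq> {..<length xs}" using S by (simp add: top_sets_def)
    have "g_pop \<epsilon> n Q = (\<Sum>i\<in>S. g_pt \<epsilon> n (xs ! i))"
      unfolding Q g_pop_def by (simp add: sum_unfold_sum_mset image_mset.compositionality comp_def)
    also have "\<dots> \<le> (\<Sum>i\<in>{..<length xs}. g_pt \<epsilon> n (xs ! i))"
      using Ssub g_pt_nonneg[OF e] by (intro sum_mono2) auto
    also have "\<dots> = sum_list (map (g_pt \<epsilon> n) xs)"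
      by (simp add: sum_list_sum_nth atLeast0LessThan)
    finally show "ennreal (g_pop \<epsilon> n Q) \<le> ennreal (sum_list (map (g_pt \<epsilon> n) xs))"
      by (rule ennreal_leI)
  qed
  also have "\<dots> = ennreal (sum_list (map (g_pt \<epsilon> n) xs))" by simp
  finally show ?thesis .
qed

lemma set_iid_list: "xs \<in> set_pmf (iid_list k D) \<Longrightarrow> length xs = k"
  by (induction k arbitrary: xs) auto

lemma iid_sum:
  assumes G: "\<And>x. 0 \<le> G x"
  shows "(\<integral>\<^sup>+xs. ennreal (sum_list (map G xs)) \<partial>iid_list k D) = of_nat k * (\<integral>\<^sup>+x. ennreal (G x) \<partial>D)"
proof (induction k)
  case 0
  then show ?case by simp
next
  case (Suc k)
  have sl: "0 \<le> sum_list (map G xs)" for xs using G by (induction xs) (auto intro: add_nonneg_nonneg)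
  have "(\<integral>\<^sup>+xs. ennreal (sum_list (map G xs)) \<partial>iid_list (Suc k) D)
     = (\<integral>\<^sup>+x. (\<integral>\<^sup>+xs. ennreal (G x) + ennreal (sum_list (map G xs)) \<partial>iid_list k D) \<partial>D)"
    using G sl by (simp add: ennreal_plus)
  also have "\<dots> = (\<integral>\<^sup>+x. ennreal (G x) + of_nat k * (\<integral>\<^sup>+x. ennreal (G x) \<partial>D) \<partial>D)"
    by (simp add: nn_integral_add Suc)
  also have "\<dots> = of_nat (Suc k) * (\<integral>\<^sup>+x. ennreal (G x) \<partial>D)"
    by (simp add: nn_integral_add algebra_simps)
  finally show ?case .
qed

lemma sum_count_mset:
  fixes h :: "'a \<Rightarrow> real"
  assumes "finite A"
  shows "set_mset P \<subseteq> A \<Longrightarrow> (\<Sum>x\<in>A. of_nat (count P x) * h x) = (\<Sum>x\<in>#P. h x)"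
proof (induction P)
  case empty
  then show ?case by simp
next
  case (add a P)
  have aA: "a \<in> A" using add.prems by simp
  have "(\<Sum>x\<in>A. of_nat (count (add_mset a P) x) * h x)
      = (\<Sum>x\<in>A. of_nat (count P x) * h x) + (\<Sum>x\<in>A. if x = a then h x else 0)"
    by (subst sum.distrib[symmetric], rule sum.cong) (auto simp: algebra_simps)
  also have "\<dots> = (\<Sum>x\<in>#P. h x) + h a" using add aA assms by (simp add: sum.delta)
  finally show ?case by simp
qed

lemma pmf_of_multiset_integral:
  assumes P: "P \<noteq> {#}" and h: "\<And>x. 0 \<le> h x"
  shows "(\<integral>\<^sup>+x. ennreal (h x) \<partial>pmf_of_multiset P) = ennreal ((\<Sum>x\<in>#P. h x) / real (size P))"
proof -
  have "(\<integral>\<^sup>+x. ennreal (h x) \<partial>pmf_of_multiset P) = (\<Sum>x\<in>set_mset P. ennreal (h x) * ennreal (real (count P x) / real (size P)))"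
    using P by (subst nn_integral_measure_pmf_finite) auto
  also have "\<dots> = ennreal (\<Sum>x\<in>set_mset P. h x * (real (count P x) / real (size P)))"
  proof -
    have "(\<Sum>x\<in>set_mset P. ennreal (h x) * ennreal (real (count P x) / real (size P)))
       = (\<Sum>x\<in>set_mset P. ennreal (h x * (real (count P x) / real (size P))))"
      by (intro sum.cong refl, rule ennreal_mult[symmetric]) (auto intro: h)
    also have "\<dots> = ennreal (\<Sum>x\<in>set_mset P. h x * (real (count P x) / real (size P)))"
      using h by (intro sum_ennreal) auto
    finally show ?thesis .
  qed
  also have "(\<Sum>x\<in>set_mset P. h x * (real (count P x) / real (size P))) = (\<Sum>x\<in>set_mset P. of_nat (count P x) * h x) / real (size P)"
    by (simp add: sum_divide_distrib mult.commute)
  also have "\<dots> = (\<Sum>x\<in>#P. h x) / real (size P)" by (simp add: sum_count_mset)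
  finally show ?thesis .
qed



lemma mut_bound:
  fixes \<epsilon> :: real and n mu lam :: nat
  assumes e0: "0 < \<epsilon>" and e1: "\<epsilon> < 1" and nt: "tau \<epsilon> \<le> real n" and len: "length x = n"
    and mu: "0 < mu" and lam: "0 < lam" and ml: "real lam \<le> (1 - \<epsilon>) * exp 1 * real mu"
  shows "(\<integral>\<^sup>+y. ennreal (g_pt \<epsilon> n y) \<partial>mutate (1 / real n) x) \<le> ennreal (real mu / real lam * g_pt \<epsilon> n x + 2)"
proof -
  define t where "t = tau \<epsilon>"
  define F where "F = nat (f0 \<epsilon> n)"
  have t1: "t \<ge> 1"
  proof -
    have "(1::real) \<le> exp 1" by simp
    moreover have "4 * exp 1 \<le> 4 * exp 1 / \<epsilon>" using e0 e1 by (simp add: le_divide_eq)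
    ultimately have "1 \<le> 4 * exp 1 / \<epsilon>" by linarith
    thus ?thesis by (simp add: t_def tau_def)
  qed
  have tpos: "t > 0" using t1 by simp
  have npos: "real n > 0" using nt t1 t_def by simp
  have a0: "alpha \<epsilon> \<ge> 0"
  proof -
    have u: "0 < 1 / t" "1 / t \<le> 1" using t1 by auto
    have "ln (1 + 1/t) \<le> 1/t" using u by (intro ln_add_one_self_le_self) simp
    hence l1: "ln (1 + 1/t) \<le> 1" using u by linarith
    have l0: "0 \<le> ln (1 + 1/t)" using u by simp
    have "(1/t) * ln (1 + 1/t) \<le> 1 * 1" using u l1 l0 by (intro mult_mono) auto
    thus ?thesis by (simp add: alpha_def t_def)
  qed
  have "0 \<le> alpha \<epsilon> * real n" using a0 by simp
  hence f0nn: "f0 \<epsilon> n \<ge> 0" unfolding f0_def by linarith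
  have F: "real F \<ge> alpha \<epsilon> * real n"
    using f0nn by (simp add: F_def f0_def)
  have gF: "g_pt \<epsilon> n y = (if F \<le> onemax y then t ^ (onemax y - F) else 0)" for y
    using f0nn by (auto simp: g_pt_def F_def t_def nat_diff_distrib')
  have gle: "g_pt \<epsilon> n y \<le> (1 / t ^ F) * t ^ onemax y" for y
  proof (cases "F \<le> onemax y")
    case True
    then show ?thesis using tpos by (simp add: gF power_diff)
  next
    case False
    then show ?thesis using tpos by (simp add: gF)
  qed
  define p where "p = 1 / real n"
  have p: "0 \<le> p" "p \<le> 1" using npos nt t1 t_def by (auto simp: p_def field_simps)
  have "(\<integral>\<^sup>+y. ennreal (g_pt \<epsilon> n y) \<partial>mutate p x) \<le> (\<integral>\<^sup>+y. ennreal (1 / t ^ F) * ennreal (t ^ onemax y) \<partial>mutate p x)"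
    using gle tpos by (intro nn_integral_mono) (simp add: ennreal_mult[symmetric] ennreal_leI)
  also have "\<dots> = ennreal (1 / t ^ F) * (\<integral>\<^sup>+y. ennreal (t ^ onemax y) \<partial>mutate p x)"
    by (simp add: nn_integral_cmult)
  also have "\<dots> = ennreal (1 / t ^ F) * ennreal (((1-p)*t + p) ^ onemax x * (p*t + (1-p)) ^ (length x - onemax x))"
    using p tpos by (simp add: mutate_gf)
  also have "\<dots> = ennreal (((1-p)*t + p) ^ onemax x * (p*t + (1-p)) ^ (length x - onemax x) / t ^ F)"
    using p tpos by (simp add: ennreal_mult[symmetric])
  also have "\<dots> \<le> ennreal (real mu / real lam * g_pt \<epsilon> n x + 2)"
  proof (rule ennreal_leI)
    have k: "onemax x \<le> n" using onemax_le[of x] len by simp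
    show "((1-p)*t + p) ^ onemax x * (p*t + (1-p)) ^ (length x - onemax x) / t ^ F \<le> real mu / real lam * g_pt \<epsilon> n x + 2"
      using key_real[OF e0 e1 nt k F mu lam ml] unfolding gF len p_def t_def by simp
  qed
  finally show ?thesis by (simp add: p_def)
qed

lemma g_pop_nonneg: "0 < \<epsilon> \<Longrightarrow> 0 \<le> g_pop \<epsilon> n P"
  unfolding g_pop_def by (induction P) (auto intro: add_nonneg_nonneg g_pt_nonneg)

theorem lemma3:
  fixes \<epsilon> :: real and mu lam :: nat
  assumes "0 < \<epsilon>" and "\<epsilon> < 1" and "0 < mu" and "0 < lam" and "mu \<le> lam"
    and "real lam \<le> (1 - \<epsilon>) * exp 1 * real mu"
  shows "\<exists>N. \<forall>n\<ge>N. \<forall>P. size P = mu \<and> (\<forall>x\<in>#P. length x = n) \<longrightarrow>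
           measure_pmf.expectation (ea_step n mu lam P) (g_pop \<epsilon> n)
             \<le> g_pop \<epsilon> n P + 2 * real lam"
proof (intro exI[of _ "nat \<lceil>tau \<epsilon>\<rceil>"] allI impI)
  note e0 = assms(1) and e1 = assms(2) and mu = assms(3) and lam = assms(4) and ml = assms(5) and mlr = assms(6)
  fix n and P :: "bool list multiset" assume n: "nat \<lceil>tau \<epsilon>\<rceil> \<le> n" and P: "size P = mu \<and> (\<forall>x\<in>#P. length x = n)"
  have nt: "tau \<epsilon> \<le> real n" using n by linarith
  have Pne: "P \<noteq> {#}" using P mu by auto
  define G where "G = g_pt \<epsilon> n"
  have G0: "0 \<le> G x" for x using g_pt_nonneg[OF e0] by (simp add: G_def)
  define R where "R = g_pop \<epsilon> n P + 2 * real lam"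
  have R0: "0 \<le> R" using g_pop_nonneg[OF e0] by (simp add: R_def)
  have "(\<integral>\<^sup>+Q. ennreal (g_pop \<epsilon> n Q) \<partial>ea_step n mu lam P)
      = (\<integral>\<^sup>+xs. (\<integral>\<^sup>+Q. ennreal (g_pop \<epsilon> n Q) \<partial>select mu xs) \<partial>iid_list lam (offspring n P))"
    by (simp add: ea_step_def)
  also have "\<dots> \<le> (\<integral>\<^sup>+xs. ennreal (sum_list (map G xs)) \<partial>iid_list lam (offspring n P))"
  proof (intro nn_integral_mono_AE AE_pmfI)
    fix xs assume "xs \<in> set_pmf (iid_list lam (offspring n P))"
    hence "mu \<le> length xs" using set_iid_list ml by fastforce
    thus "(\<integral>\<^sup>+Q. ennreal (g_pop \<epsilon> n Q) \<partial>select mu xs) \<le> ennreal (sum_list (map G xs))"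
      unfolding G_def by (rule select_bound[OF e0])
  qed
  also have "\<dots> = of_nat lam * (\<integral>\<^sup>+x. ennreal (G x) \<partial>offspring n P)"
    using G0 by (rule iid_sum)
  also have "(\<integral>\<^sup>+x. ennreal (G x) \<partial>offspring n P) = (\<integral>\<^sup>+x. (\<integral>\<^sup>+y. ennreal (G y) \<partial>mutate (1 / real n) x) \<partial>pmf_of_multiset P)"
    by (simp add: offspring_def)
  also have "\<dots> \<le> (\<integral>\<^sup>+x. ennreal (real mu / real lam * G x + 2) \<partial>pmf_of_multiset P)"
  proof (intro nn_integral_mono_AE AE_pmfI)
    fix x assume "x \<in> set_pmf (pmf_of_multiset P)"
    hence "length x = n" using P Pne by simp
    thus "(\<integral>\<^sup>+y. ennreal (G y) \<partial>mutate (1 / real n) x) \<le> ennreal (real mu / real lam * G x + 2)"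
      unfolding G_def by (rule mut_bound[OF e0 e1 nt _ mu lam mlr])
  qed
  also have "\<dots> = ennreal ((\<Sum>x\<in>#P. real mu / real lam * G x + 2) / real (size P))"
    using G0 Pne by (intro pmf_of_multiset_integral) auto
  also have "(\<Sum>x\<in>#P. real mu / real lam * G x + 2) = real mu / real lam * g_pop \<epsilon> n P + 2 * real mu"
    using P by (simp add: sum_mset.distrib sum_mset_distrib_left g_pop_def G_def)
  finally have le: "(\<integral>\<^sup>+Q. ennreal (g_pop \<epsilon> n Q) \<partial>ea_step n mu lam P)
     \<le> of_nat lam * ennreal ((real mu / real lam * g_pop \<epsilon> n P + 2 * real mu) / real mu)"
    using P by (simp add: mult_left_mono)
  also have "\<dots> = ennreal R"
  proof -
    have "real lam * ((real mu / real lam * g_pop \<epsilon> n P + 2 * real mu) / real mu) = R"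
      using mu lam by (simp add: R_def field_simps)
    thus ?thesis using g_pop_nonneg[OF e0] mu lam
      by (simp add: ennreal_of_nat_eq_real_of_nat ennreal_mult[symmetric] del: of_nat_0_less_iff)
  qed
  finally have le2: "(\<integral>\<^sup>+Q. ennreal (g_pop \<epsilon> n Q) \<partial>ea_step n mu lam P) \<le> ennreal R" .
  have "measure_pmf.expectation (ea_step n mu lam P) (g_pop \<epsilon> n) = enn2real (\<integral>\<^sup>+Q. ennreal (g_pop \<epsilon> n Q) \<partial>ea_step n mu lam P)"
    using g_pop_nonneg[OF e0] by (intro integral_eq_nn_integral) auto
  also have "\<dots> \<le> enn2real (ennreal R)" using le2 by (intro enn2real_mono) auto
  also have "\<dots> = R" using R0 by simp
  finally show "measure_pmf.expectation (ea_step n mu lam P) (g_pop \<epsilon> n) \<le> g_pop \<epsilon> n P + 2 * real lam"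
    by (simp add: R_def)
qed


end
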